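(* Let $\Omega$ be a finite set of skills over a state space $\mathcal{S}$, where each $\omega\in\Omega$ has a true initiation set $I_\omega\subseteq\mathcal{S}$ and termination set $\beta_\omega\subseteq\mathcal{S}$, and let $\mathcal{M}^*$ be a complete model for $\Omega$ realizing exactly these sets. Let $\mu$ be a probability distribution over $\mathcal{S}\times\Omega\times\mathcal{S}$. Let $\mathcal{H}$ be a finite hypothesis class of models, each $\mathcal{M}=(\mathcal{P},\mathcal{A})\in\mathcal{H}$ assigning to every $\omega\in\Omega$ a learned initiation set $\widehat I_\omega=\bigcup_{a\in\mathcal{A}_\omega}\mathcal{G}(\mathrm{Pre}_a)$ and learned termination set $\widehat\beta_\omega=\bigcup_{a\in\mathcal{A}_\omega}\big(\mathcal{G}(\mathrm{Pre}_a)\setminus\mathcal{G}(\mathrm{Eff}^-_a)\big)\cup\mathcal{G}(\mathrm{Eff}^+_a)$. For $\mathcal{M}\in\mathcal{H}$ define \[d_{\mathrm{compl}}(\mathcal{M},\mathcal{M}^* )=\Pr_{(s,\omega,s')\sim\mu}\big[(s\in\widehat I_\omega\,\triangle\, I_\omega)\vee(s'\in\widehat\beta_\omega\,\triangle\,\beta_\omega)\big].\] Let $n$ i.i.d. samples $(s_i,\omega_i,s_i')_{i=1}^n$ be drawn from $\mu$, and let $\widehat{\mathcal{M}}_n\in\mathcal{H}$ be the model learned by SkillWrapper from them, which is consistent with every sample, i.e. for all $i$: $s_i\notin\widehat I_{\omega_i}\triangle I_{\omega_i}$ and $s_i'\notin\widehat\beta_{\omega_i}\triangle\beta_{\omega_i}$.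 Then for every $\epsilon>0$, \[\Pr\big[d_{\mathrm{compl}}(\widehat{\mathcal{M}}_n,\mathcal{M}^* )\le\epsilon\big]\ge 1-|\mathcal{H}|\,e^{-n\epsilon}.\]
   Context: A model $\mathcal{M}=(\mathcal{P},\mathcal{A})$ consists of a set of predicates $\mathcal{P}$ and a set of operators $\mathcal{A}=\bigcup_{\omega}\mathcal{A}_\omega$, where $\mathcal{A}_\omega$ are the operators associated with skill $\omega$; each operator $a$ has a precondition set $\mathrm{Pre}_a$ and add/delete effect sets $\mathrm{Eff}^+_a,\mathrm{Eff}^-_a$ of predicates. The grounding function $\mathcal{G}$ maps a set of predicates to the set of low-level states in which all those predicates hold. $\triangle$ denotes symmetric difference. *)

theory Defs
  imports "HOL-Probability.Probability"
begin

record ('p, 'w) operator =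
  op_skill :: 'w
  op_pre :: "'p set"
  op_eff_add :: "'p set"
  op_eff_del :: "'p set"

text \<open>A model (P, A): a set of predicates and a set of operators; A_omega are the
operators associated with skill omega.\<close>
type_synonym ('p, 'w) model = "'p set \<times> ('p, 'w) operator set"

definition ops_of :: "('p, 'w) model \<Rightarrow> 'w \<Rightarrow> ('p, 'w) operator set" where
  "ops_of M w = {a \<in> snd M. op_skill a = w}"

text \<open>G is the grounding function: a set of predicates to the set of low-level
states in which all of them hold.\<close>
definition learned_init :: "('p set \<Rightarrow> 's set) \<Rightarrow> ('p, 'w) model \<Rightarrow> 'w \<Rightarrow> 's set" where
  "learned_init G M w = (\<Union>a\<in>ops_of M w. G (op_pre a))"

definition learned_term :: "('p set \<Rightarrow> 's set) \<Rightarrow> ('p, 'w) model \<Rightarrow> 'w \<Rightarrow> 's set" where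
  "learned_term G M w =
     (\<Union>a\<in>ops_of M w. (G (op_pre a) - G (op_eff_del a)) \<union> G (op_eff_add a))"

definition symdiff :: "'a set \<Rightarrow> 'a set \<Rightarrow> 'a set" where
  "symdiff A B = (A - B) \<union> (B - A)"

definition compl_err ::
  "('p set \<Rightarrow> 's set) \<Rightarrow> ('w \<Rightarrow> 's set) \<Rightarrow> ('w \<Rightarrow> 's set) \<Rightarrow> ('p, 'w) model
     \<Rightarrow> 's \<times> 'w \<times> 's \<Rightarrow> bool" where
  "compl_err G I \<beta> M x = (case x of (s, w, s') \<Rightarrow>
      s \<in> symdiff (learned_init G M w) (I w) \<or> s' \<in> symdiff (learned_term G M w) (\<beta> w))"

definition d_compl ::
  "('s \<times> 'w \<times> 's) measure \<Rightarrow> ('p set \<Rightarrow> 's set) \<Rightarrow> ('w \<Rightarrow> 's set) \<Rightarrow> ('w \<Rightarrow> 's set)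
     \<Rightarrow> ('p, 'w) model \<Rightarrow> real" where
  "d_compl \<mu> G I \<beta> M = measure \<mu> {x \<in> space \<mu>. compl_err G I \<beta> M x}"

end

theory Submission
  imports Defs
begin

lemma pow_meas:
  assumes P: "prob_space \<mu>" and E: "E \<in> sets \<mu>"
  shows "measure (PiM {..<n} (\<lambda>_. \<mu>)) {xs \<in> space (PiM {..<n} (\<lambda>_. \<mu>)). \<forall>i<n. xs i \<notin> E}
     = (1 - measure \<mu> E) ^ n"
proof -
  interpret prob_space \<mu> by fact
  interpret PS: product_sigma_finite "\<lambda>_::nat. \<mu>" by unfold_locales
  have eq: "{xs \<in> space (PiM {..<n} (\<lambda>_. \<mu>)). \<forall>i<n. xs i \<notin> E} = PiE {..<n} (\<lambda>_. space \<mu> - E)"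
    by (auto simp: space_PiM PiE_iff extensional_def)
  have "emeasure (PiM {..<n} (\<lambda>_. \<mu>)) (PiE {..<n} (\<lambda>_. space \<mu> - E)) = (\<Prod>i<n. emeasure \<mu> (space \<mu> - E))"
    using E by (subst PS.emeasure_PiM) auto
  also have "\<dots> = ennreal ((1 - measure \<mu> E) ^ n)"
    using E by (simp add: emeasure_eq_measure prob_compl prod_ennreal ennreal_power)
  finally have "emeasure (PiM {..<n} (\<lambda>_. \<mu>)) (PiE {..<n} (\<lambda>_. space \<mu> - E)) = ennreal ((1 - measure \<mu> E) ^ n)" .
  moreover have "0 \<le> (1 - measure \<mu> E) ^ n" using prob_le_1[of E] by simp
  ultimately show ?thesis unfolding eq measure_def[of "PiM {..<n} (\<lambda>_. \<mu>)"] by simp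
qed

lemma pow_bound:
  fixes p e :: real
  assumes "e < p" "p \<le> 1"
  shows "(1 - p) ^ n \<le> exp (- real n * e)"
proof -
  have "(1 - p) ^ n \<le> exp (- p) ^ n"
    using assms exp_ge_add_one_self[of "-p"] by (intro power_mono) auto
  also have "\<dots> = exp (- real n * p)" by (simp add: exp_of_nat_mult[symmetric])
  also have "\<dots> \<le> exp (- real n * e)" using assms by (simp add: mult_left_mono)
  finally show ?thesis .
qed

theorem mainTheorem2:
  fixes \<mu> :: "('s \<times> 'w::finite \<times> 's) measure"
    and G :: "'p set \<Rightarrow> 's set"
    and I \<beta> :: "'w \<Rightarrow> 's set"
    and Mstar :: "('p, 'w) model"
    and H :: "('p, 'w) model set"
    and n :: nat
    and learner :: "(nat \<Rightarrow> 's \<times> 'w \<times> 's) \<Rightarrow> ('p, 'w) model"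
    and \<epsilon> :: real
  assumes "prob_space \<mu>"
    and "\<forall>w. learned_init G Mstar w = I w \<and> learned_term G Mstar w = \<beta> w"
    and "finite H"
    and "learner \<in> measurable (PiM {..<n} (\<lambda>_. \<mu>)) (count_space H)"
    and "\<forall>xs\<in>space (PiM {..<n} (\<lambda>_. \<mu>)). learner xs \<in> H \<and>
           (\<forall>i<n. fst (xs i) \<notin> symdiff (learned_init G (learner xs) (fst (snd (xs i)))) (I (fst (snd (xs i))))
                 \<and> snd (snd (xs i)) \<notin> symdiff (learned_term G (learner xs) (fst (snd (xs i)))) (\<beta> (fst (snd (xs i)))))"
    and "\<epsilon> > 0"
  shows "measure (PiM {..<n} (\<lambda>_. \<mu>))
           {xs \<in> space (PiM {..<n} (\<lambda>_. \<mu>)). d_compl \<mu> G I \<beta> (learner xs) \<le> \<epsilon>}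
         \<ge> 1 - real (card H) * exp (- real n * \<epsilon>)"
proof -
  note A = assms
  interpret M: prob_space \<mu> by fact
  interpret P: prob_space "PiM {..<n} (\<lambda>_. \<mu>)" using A(1) by (intro prob_space_PiM)
  define S where "S = space (PiM {..<n} (\<lambda>_. \<mu>))"
  define E where "E M = {x \<in> space \<mu>. compl_err G I \<beta> M x}" for M
  define B where "B = {M\<in>H. d_compl \<mu> G I \<beta> M > \<epsilon>}"
  define F where "F M = {xs \<in> S. \<forall>i<n. xs i \<notin> E M}" for M
  have dE: "d_compl \<mu> G I \<beta> M = measure \<mu> (E M)" for M unfolding d_compl_def E_def by simp
  have BE: "E M \<in> sets \<mu>" "measure \<mu> (E M) > \<epsilon>" if "M \<in> B" for M
  proof -
    show "measure \<mu> (E M) > \<epsilon>" using that by (simp add: B_def dE)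
    then show "E M \<in> sets \<mu>" using A(6) measure_notin_sets[of "E M" \<mu>] by force
  qed
  have finB: "finite B" using A(3) by (simp add: B_def)
  have Fsets: "F M \<in> sets (PiM {..<n} (\<lambda>_. \<mu>))" if "M \<in> B" for M
  proof -
    have "F M = PiE {..<n} (\<lambda>_. space \<mu> - E M)"
      by (auto simp: F_def S_def space_PiM PiE_iff extensional_def)
    then show ?thesis using BE[OF that] by (auto intro!: sets_PiM_I_finite)
  qed
  have Fmeas: "measure (PiM {..<n} (\<lambda>_. \<mu>)) (F M) \<le> exp (- real n * \<epsilon>)" if "M \<in> B" for M
    unfolding F_def S_def pow_meas[OF A(1) BE(1)[OF that]]
    using BE(2)[OF that] M.prob_le_1 by (intro pow_bound) auto
  define Good where "Good = {xs \<in> S. d_compl \<mu> G I \<beta> (learner xs) \<le> \<epsilon>}"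
  have Geq: "Good = learner -` {M\<in>H. d_compl \<mu> G I \<beta> M \<le> \<epsilon>} \<inter> S"
    using A(5) by (auto simp: Good_def S_def)
  have Gsets: "Good \<in> sets (PiM {..<n} (\<lambda>_. \<mu>))"
    unfolding Geq S_def by (rule measurable_sets[OF A(4)]) auto
  have sub: "S - Good \<subseteq> (\<Union>M\<in>B. F M)"
  proof
    fix xs assume xs: "xs \<in> S - Good"
    then have lH: "learner xs \<in> H" and cons: "\<forall>i<n. fst (xs i) \<notin> symdiff (learned_init G (learner xs) (fst (snd (xs i)))) (I (fst (snd (xs i))))
                 \<and> snd (snd (xs i)) \<notin> symdiff (learned_term G (learner xs) (fst (snd (xs i)))) (\<beta> (fst (snd (xs i))))"
      using A(5) by (auto simp: S_def)
    have "learner xs \<in> B" using xs lH by (auto simp: B_def Good_def)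
    moreover have "xs \<in> F (learner xs)"
    proof -
      have "\<not> compl_err G I \<beta> (learner xs) (xs i)" if "i < n" for i
        using cons that by (cases "xs i") (auto simp: compl_err_def)
      then show ?thesis using xs by (auto simp: F_def E_def)
    qed
    ultimately show "xs \<in> (\<Union>M\<in>B. F M)" by blast
  qed
  have "P.prob (S - Good) \<le> P.prob (\<Union>M\<in>B. F M)"
    using sub Fsets finB by (intro P.finite_measure_mono) auto
  also have "\<dots> \<le> (\<Sum>M\<in>B. P.prob (F M))"
    using finB Fsets by (intro measure_UNION_le) auto
  also have "\<dots> \<le> (\<Sum>M\<in>B. exp (- real n * \<epsilon>))"
    using Fmeas by (intro sum_mono) auto
  also have "\<dots> = real (card B) * exp (- real n * \<epsilon>)" by simp
  also have "\<dots> \<le> real (card H) * exp (- real n * \<epsilon>)"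
    using A(3) by (intro mult_right_mono) (auto simp: B_def intro!: card_mono)
  finally have "P.prob (S - Good) \<le> real (card H) * exp (- real n * \<epsilon>)" .
  moreover have "P.prob (S - Good) = 1 - P.prob Good"
    using Gsets P.prob_compl unfolding S_def by auto
  ultimately show ?thesis unfolding Good_def S_def by simp
qed

end
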